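(* Let $t\ge 2$. Let $G$ be a stitched 2-ichromatic ordered graph with vertices $v_1<\dots<v_{m+n}$ whose parts are $\{v_1,\ldots,v_m\}$ and $\{v_{m+1},\ldots,v_{m+n}\}$. If $v_1v_{m+n}$ and $v_mv_{m+1}$ are edges of $G$, then $R_t(G)\ge (2t+1)r+1$, where $r=\min(m,n)-1$.
   Context: An ordered graph is a graph together with a specified linear ordering of its vertex set. An ordered graph $G$ is contained in an ordered graph $H$ if there is an order-preserving injection $V(G)\to V(H)$ mapping edges to edges. An interval coloring of an ordered graph is a partition of its vertex set into independent sets each consisting of consecutive vertices (called parts); an ordered graph is 2-ichromatic if its minimum number of parts in an interval coloring is 2. A 2-ichromatic ordered graph is stitched if the four vertices consisting of the first and last vertex of each of the two parts lie in a single connected component. $R_t(G)$ is the minimum $N$ such that every coloring of the edges of the ordered complete graph on $N$ vertices with $t$ colors contains a monochromatic copy of $G$. *)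

theory Defs
  imports Main
begin

text \<open>An ordered graph on N vertices: vertex set {0..<N} with the natural order
  (vertex v_i of the paper is the number i-1), edge relation E.\<close>

definition ordered_graph :: "nat \<Rightarrow> (nat \<Rightarrow> nat \<Rightarrow> bool) \<Rightarrow> bool" where
  "ordered_graph N E \<longleftrightarrow> (\<forall>i j. E i j \<longrightarrow> i < N \<and> j < N \<and> i \<noteq> j \<and> E j i)"

definition independent :: "(nat \<Rightarrow> nat \<Rightarrow> bool) \<Rightarrow> nat set \<Rightarrow> bool" where
  "independent E S \<longleftrightarrow> (\<forall>i\<in>S. \<forall>j\<in>S. \<not> E i j)"

definition interval_coloring :: "nat \<Rightarrow> (nat \<Rightarrow> nat \<Rightarrow> bool) \<Rightarrow> nat \<Rightarrow> (nat \<Rightarrow> nat) \<Rightarrow> bool" where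
  "interval_coloring N E k b \<longleftrightarrow> b 0 = 0 \<and> b k = N \<and> (\<forall>i<k. b i < b (Suc i))
     \<and> (\<forall>i<k. independent E {b i..<b (Suc i)})"

definition ichromatic_number :: "nat \<Rightarrow> (nat \<Rightarrow> nat \<Rightarrow> bool) \<Rightarrow> nat" where
  "ichromatic_number N E = (LEAST k. \<exists>b. interval_coloring N E k b)"

definition connected_in :: "(nat \<Rightarrow> nat \<Rightarrow> bool) \<Rightarrow> nat \<Rightarrow> nat \<Rightarrow> bool" where
  "connected_in E x y \<longleftrightarrow> E\<^sup>*\<^sup>* x y"

text \<open>t-edge-coloring of the ordered complete graph on {0..<N}: the color of edge {i,j}
  with i<j is c i j, and it lies in {0..<t}.\<close>

definition edge_coloring :: "nat \<Rightarrow> nat \<Rightarrow> (nat \<Rightarrow> nat \<Rightarrow> nat) \<Rightarrow> bool" where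
  "edge_coloring N t c \<longleftrightarrow> (\<forall>i j. i < j \<and> j < N \<longrightarrow> c i j < t)"

definition mono_copy :: "nat \<Rightarrow> (nat \<Rightarrow> nat \<Rightarrow> nat) \<Rightarrow> nat \<Rightarrow> (nat \<Rightarrow> nat \<Rightarrow> bool) \<Rightarrow> bool" where
  "mono_copy N c M E \<longleftrightarrow> (\<exists>f col. strict_mono_on {0..<M} f \<and> f ` {0..<M} \<subseteq> {0..<N}
      \<and> (\<forall>i j. i < j \<and> j < M \<and> E i j \<longrightarrow> c (f i) (f j) = col))"

definition arrows :: "nat \<Rightarrow> nat \<Rightarrow> nat \<Rightarrow> (nat \<Rightarrow> nat \<Rightarrow> bool) \<Rightarrow> bool" where
  "arrows N t M E \<longleftrightarrow> (\<forall>c. edge_coloring N t c \<longrightarrow> mono_copy N c M E)"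

definition ordered_ramsey :: "nat \<Rightarrow> nat \<Rightarrow> (nat \<Rightarrow> nat \<Rightarrow> bool) \<Rightarrow> nat" where
  "ordered_ramsey t M E = (LEAST N. arrows N t M E)"

end

theory Submission
  imports Defs "HOL-Library.Ramsey"
begin

definition colr :: "nat \<Rightarrow> nat \<Rightarrow> nat \<Rightarrow> nat \<Rightarrow> nat" where
  "colr t r x y = (let i = x div r; j = y div r; L = j - i in
     if L = 2*t \<or> (L \<le> 1 \<and> 1 \<le> i \<and> j + 1 \<le> 2*t) then 0 else min (t-1) (max 1 (L div 2)))"

lemma ramsey_exists:
  assumes "t \<ge> 1"
  shows "\<exists>N. arrows N t M E"
proof -
  obtain N :: nat where N: "partn_lst {..<N} (replicate t M) 2"
    using ramsey_full[of "replicate t M" 2] by blast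
  have "arrows N t M E"
    unfolding arrows_def
  proof (intro allI impI)
    fix c assume ec: "edge_coloring N t c"
    define g where "g S = c (Min S) (Max S)" for S :: "nat set"
    have "g \<in> nsets {..<N} 2 \<rightarrow> {..<length (replicate t M)}"
    proof
      fix S assume "S \<in> nsets {..<N} 2"
      then obtain x y where S: "S = {x,y}" "x < y" "y < N"
        by (auto simp: nsets_def card_2_iff) (metis lessThan_iff insert_subset linorder_neqE_nat insert_commute)
      then show "g S \<in> {..<length (replicate t M)}"
        using ec by (auto simp: g_def edge_coloring_def)
    qed
    then obtain i where i: "i < t" and mono: "monochromatic {..<N} M 2 g i"
      using N unfolding partn_lst_def by auto
    then obtain H where H: "H \<in> nsets {..<N} M" and gH: "g ` nsets H 2 \<subseteq> {i}"
      unfolding monochromatic_def by auto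
    have fH: "finite H" "card H = M" "H \<subseteq> {..<N}" using H by (auto simp: nsets_def)
    define xs where "xs = sorted_list_of_set H"
    have sx: "sorted_wrt (<) xs" "set xs = H" "length xs = M"
      using fH by (auto simp: xs_def)
    show "mono_copy N c M E"
      unfolding mono_copy_def
    proof (intro exI conjI allI impI)
      show "strict_mono_on {0..<M} ((!) xs)"
        using sx by (auto simp: strict_mono_on_def sorted_wrt_iff_nth_less)
      show "(!) xs ` {0..<M} \<subseteq> {0..<N}"
        using sx fH by auto (metis lessThan_iff nth_mem subsetD)
      fix a b assume ab: "a < b \<and> b < M \<and> E a b"
      have lt: "xs ! a < xs ! b" using sx ab by (auto simp: sorted_wrt_iff_nth_less)
      have "{xs ! a, xs ! b} \<in> nsets H 2"
        using lt ab sx by (auto simp: nsets_def)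
      then have "g {xs ! a, xs ! b} = i" using gH by blast
      then show "c (xs ! a) (xs ! b) = i" using lt by (simp add: g_def)
    qed
  qed
  then show ?thesis by blast
qed


lemma strict_mono_dist:
  fixes f :: "nat \<Rightarrow> nat" and M i j :: nat
  assumes "strict_mono_on {0..<M} f" "i \<le> j" "j < M"
  shows "f i + (j - i) \<le> f j"
proof -
  have "i \<le> j \<longrightarrow> j < M \<longrightarrow> f i + (j - i) \<le> f j"
  proof (induction j)
    case 0 then show ?case by simp
  next
    case (Suc j)
    show ?case
    proof (intro impI)
      assume h: "i \<le> Suc j" "Suc j < M"
      show "f i + (Suc j - i) \<le> f (Suc j)"
      proof (cases "i = Suc j")
        case True then show ?thesis by simp
      next
        case False
        then have ij: "i \<le> j" using h by simp
        then have "f i + (j - i) \<le> f j" using Suc h by simp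
        moreover have "f j < f (Suc j)" using assms(1) h by (auto simp: strict_mono_on_def)
        ultimately show ?thesis using ij by simp
      qed
    qed
  qed
  then show ?thesis using assms by simp
qed

definition colrB :: "nat \<Rightarrow> nat \<Rightarrow> nat \<Rightarrow> nat" where
  "colrB t i j = (if j - i = 2*t \<or> (j - i \<le> 1 \<and> 1 \<le> i \<and> j + 1 \<le> 2*t) then 0 else min (t-1) (max 1 ((j - i) div 2)))"

lemma colr_B: "colr t r x y = colrB t (x div r) (y div r)"
  unfolding colr_def colrB_def Let_def by simp

lemma colrB_zero:
  assumes "t \<ge> 2" "colrB t i j = 0"
  shows "j - i = 2*t \<or> (j - i \<le> 1 \<and> 1 \<le> i \<and> j + 1 \<le> 2*t)"
proof -
  have "min (t-1) (max 1 ((j - i) div 2)) \<noteq> 0" using assms(1) by simp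
  then show ?thesis using assms(2) unfolding colrB_def by (auto split: if_splits)
qed

lemma out_arith:
  fixes i j t :: nat
  assumes "i \<le> j" "j \<le> 2*t" "t \<ge> 2" "j - i = 2*t \<or> (j - i \<le> 1 \<and> 1 \<le> i \<and> j+1 \<le> 2*t)"
  shows "(i = 0 \<or> i = 2*t) \<longleftrightarrow> (j = 0 \<or> j = 2*t)"
  using assms by arith

lemma nocopy:
  assumes t: "t \<ge> 2" and mr: "m \<ge> r + 1" and nr: "n \<ge> r + 1" and N: "N \<le> (2*t+1)*r"
    and og: "ordered_graph (m + n) E"
    and conn: "connected_in E 0 (m - 1)"
    and e1: "E 0 (m + n - 1)" and e2: "E (m - 1) m"
  shows "\<not> mono_copy N (colr t r) (m + n) E"
proof
  assume "mono_copy N (colr t r) (m + n) E"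
  then obtain f cl where sm: "strict_mono_on {0..<m+n} f" and fim: "f ` {0..<m+n} \<subseteq> {0..<N}"
    and mc0: "\<forall>i j. i < j \<and> j < m + n \<and> E i j \<longrightarrow> colr t r (f i) (f j) = cl"
    unfolding mono_copy_def by (elim exE conjE) blast
  have mc: "colr t r (f i) (f j) = cl" if "i < j" "j < m + n" "E i j" for i j
    using mc0 that by blast
  have "(0::nat) \<in> {0..<m+n}" using mr by simp
  then have "f 0 \<in> {0..<N}" using fim by blast
  then have "f 0 < N" by simp
  then have rpos: "r \<ge> 1" using N by (cases r) auto
  define a where "a = f 0"
  define b where "b = f (m - 1)"
  define c where "c = f m"
  define d where "d = f (m + n - 1)"
  have "f 0 + (m - 1 - 0) \<le> f (m - 1)" using mr nr by (intro strict_mono_dist[OF sm]) auto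
  then have ab: "a + r \<le> b" using mr unfolding a_def b_def by linarith
  have "m - 1 < m" "m < m + n" using mr nr by auto
  then have bc: "b < c" using sm unfolding b_def c_def strict_mono_on_def by simp
  have "f m + (m + n - 1 - m) \<le> f (m + n - 1)" using mr nr by (intro strict_mono_dist[OF sm]) auto
  then have cd: "c + r \<le> d" using nr unfolding c_def d_def by linarith
  have "m + n - 1 \<in> {0..<m+n}" using mr by simp
  then have "f (m + n - 1) \<in> {0..<N}" using fim by blast
  then have dN: "d < N" unfolding d_def by simp
  define A where "A = a div r"
  define B where "B = b div r"
  define C where "C = c div r"
  define D where "D = d div r"
  have AB: "A + 1 \<le> B"
  proof -
    have "(a + r) div r \<le> b div r" using ab div_le_mono by blast
    then show ?thesis using rpos unfolding A_def B_def by simp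
  qed
  have BC: "B \<le> C" unfolding B_def C_def using bc div_le_mono by simp
  have CD: "C + 1 \<le> D"
  proof -
    have "(c + r) div r \<le> d div r" using cd div_le_mono by blast
    then show ?thesis using rpos unfolding C_def D_def by simp
  qed
  have D2t: "D \<le> 2*t"
  proof -
    have "d < (2*t+1)*r" using dN N by simp
    then have "d div r < 2*t+1" using rpos by (simp add: div_less_iff_less_mult)
    then show ?thesis unfolding D_def by simp
  qed
  have cad: "colrB t A D = cl" using mc[of 0 "m+n-1"] e1 mr nr unfolding a_def d_def A_def D_def colr_B by simp
  have cbc: "colrB t B C = cl" using mc[of "m-1" m] e2 mr nr unfolding b_def c_def B_def C_def colr_B by simp
  show False
  proof (cases "cl = 0")
    case True
    have "D - A = 2*t \<or> (D - A \<le> 1 \<and> 1 \<le> A \<and> D + 1 \<le> 2*t)"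
      using colrB_zero[OF t] cad True by simp
    then have z: "D - A = 2*t" using AB BC CD by linarith
    then have A0: "A = 0" and D2: "D = 2*t" using D2t t by auto
    define Out where "Out v = (f v div r = 0 \<or> f v div r = 2*t)" for v
    have bnd: "f v div r \<le> 2*t" if "v < m + n" for v
    proof -
      have "v \<in> {0..<m+n}" using that by simp
      then have "f v \<in> {0..<N}" using fim by blast
      then have "f v < N" by simp
      then have "f v < (2*t+1)*r" using N by linarith
      then have "f v div r < 2*t+1" using rpos by (simp add: div_less_iff_less_mult)
      then show ?thesis by simp
    qed
    have key: "Out u = Out v" if uv: "u < v" "v < m+n" "E u v" for u v
    proof -
      have "colrB t (f u div r) (f v div r) = 0" using mc[OF uv] True by (simp add: colr_B)
      from colrB_zero[OF t this] have h: "f v div r - f u div r = 2 * t \<or>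
        f v div r - f u div r \<le> 1 \<and> 1 \<le> f u div r \<and> f v div r + 1 \<le> 2 * t" .
      have "f u < f v" using uv by (intro strict_mono_onD[OF sm]) auto
      then have "f u \<le> f v" by simp
      then have "f u div r \<le> f v div r" by (rule div_le_mono)
      moreover have "f v div r \<le> 2*t" using bnd uv by simp
      ultimately have "(f u div r = 0 \<or> f u div r = 2*t) = (f v div r = 0 \<or> f v div r = 2*t)"
        by (rule out_arith[OF _ _ t h])
      then show ?thesis unfolding Out_def .
    qed
    have inv: "Out x = Out y" if "E x y" for x y
    proof -
      have "x < m+n \<and> y < m+n \<and> x \<noteq> y \<and> E y x" using og that unfolding ordered_graph_def by blast
      then have xy: "x < m+n" "y < m+n" "x \<noteq> y" "E y x" by auto
      show ?thesis
      proof (cases "x < y")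
        case True then show ?thesis using key[of x y] xy that by simp
      next
        case False then have "y < x" using xy by simp
        then show ?thesis using key[of y x] xy by simp
      qed
    qed
    have "Out 0 \<longrightarrow> Out (m - 1)"
      using conn unfolding connected_in_def
    proof (induction rule: rtranclp_induct)
      case base then show ?case by simp
    next
      case (step y z) then show ?case using inv[of y z] by simp
    qed
    moreover have "Out 0" using A0 unfolding Out_def A_def a_def by simp
    moreover have "\<not> Out (m - 1)"
    proof -
      have "B \<noteq> 0" "B \<noteq> 2*t" using AB BC CD D2 by linarith+
      then show ?thesis unfolding Out_def B_def b_def by simp
    qed
    ultimately show False by blast
  next
    case False
    have nz: "D - A \<noteq> 2*t"
    proof
      assume "D - A = 2*t"
      then have "colrB t A D = 0" unfolding colrB_def by simp
      then show False using cad False by simp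
    qed
    have L2: "2 \<le> D - A" using AB BC CD by linarith
    have L3: "D - A + 1 \<le> 2*t" using nz D2t by linarith
    have h1: "(D - A) div 2 \<ge> 1"
    proof -
      have "2 div 2 \<le> (D - A) div 2" using L2 by (rule div_le_mono)
      then show ?thesis by simp
    qed
    have h2: "(D - A) div 2 \<le> t - 1"
    proof -
      have "(D - A) div 2 \<le> (2*t - 1) div 2" using L3 by (intro div_le_mono) linarith
      moreover have "(2*t - 1) div 2 = t - 1"
      proof -
        have "2*t - 1 = 1 + 2*(t-1)" using t by simp
        then show ?thesis by simp
      qed
      ultimately show ?thesis by simp
    qed
    have ne: "\<not> (D - A \<le> 1 \<and> 1 \<le> A \<and> D + 1 \<le> 2*t)" using L2 by linarith
    have "colrB t A D = min (t-1) (max 1 ((D - A) div 2))"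
      unfolding colrB_def by (rule if_not_P) (use nz ne in blast)
    then have cl1: "cl = (D - A) div 2" using cad h1 h2 by simp
    show False
    proof (cases "C - B \<le> 1")
      case True
      have "1 \<le> B" "C + 1 \<le> 2*t" using AB CD D2t by linarith+
      then have "colrB t B C = 0" unfolding colrB_def by (intro if_P disjI2 conjI True)
      then show ?thesis using False cbc by simp
    next
      case F2: False
      have ne1: "C - B \<noteq> 2*t" using CD D2t AB by linarith
      have "colrB t B C = min (t-1) (max 1 ((C - B) div 2))"
        unfolding colrB_def by (rule if_not_P) (use F2 ne1 in blast)
      moreover have m1: "max 1 ((C - B) div 2) = (C - B) div 2"
      proof -
        have "2 \<le> C - B" using F2 by linarith
        then have "2 div 2 \<le> (C - B) div 2" by (rule div_le_mono)
        then show ?thesis by simp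
      qed
      moreover have "(C - B) div 2 < (D - A) div 2"
      proof -
        have "C - B + 2 \<le> D - A" using AB BC CD by linarith
        then have "(C - B + 2) div 2 \<le> (D - A) div 2" by (rule div_le_mono)
        then show ?thesis by simp
      qed
      ultimately have lt: "colrB t B C = min (t-1) ((C - B) div 2)" "(C - B) div 2 < (D - A) div 2" by simp_all
      have "cl \<le> (C - B) div 2" using lt(1) cbc by simp
      then have "cl < (D - A) div 2" using lt(2) by linarith
      then show ?thesis using cl1 by simp
    qed
  qed
qed

lemma colr_lt: "t \<ge> 2 \<Longrightarrow> colr t r x y < t"
  unfolding colr_def Let_def by auto

theorem corollary5p1:
  fixes t m n :: nat and E :: "nat \<Rightarrow> nat \<Rightarrow> bool"
  assumes "t \<ge> 2" and "m \<ge> 1" and "n \<ge> 1"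
    and "ordered_graph (m + n) E"
    and "ichromatic_number (m + n) E = 2"
    and "interval_coloring (m + n) E 2 (\<lambda>i. if i = 0 then 0 else if i = 1 then m else m + n)"
    and "\<forall>x\<in>{0, m - 1, m, m + n - 1}. \<forall>y\<in>{0, m - 1, m, m + n - 1}. connected_in E x y"
    and "E 0 (m + n - 1)" and "E (m - 1) m"
  shows "ordered_ramsey t (m + n) E \<ge> (2 * t + 1) * (min m n - 1) + 1"
proof -
  define r where "r = min m n - 1"
  have mr: "m \<ge> r + 1" and nr: "n \<ge> r + 1" using assms(2,3) unfolding r_def by auto
  have conn: "connected_in E 0 (m - 1)" using assms(7) by simp
  obtain N0 where "arrows N0 t (m + n) E" using ramsey_exists[of t] assms(1) by auto
  then have L: "arrows (ordered_ramsey t (m + n) E) t (m + n) E"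
    unfolding ordered_ramsey_def by (rule LeastI)
  have na: "\<not> arrows N t (m + n) E" if "N \<le> (2*t+1)*r" for N
  proof
    assume "arrows N t (m + n) E"
    moreover have "edge_coloring N t (colr t r)"
      unfolding edge_coloring_def using colr_lt[OF assms(1)] by blast
    ultimately have "mono_copy N (colr t r) (m + n) E" unfolding arrows_def by blast
    then show False using nocopy[OF assms(1) mr nr that assms(4) conn assms(8,9)] by blast
  qed
  show ?thesis
  proof (rule ccontr)
    assume "\<not> ?thesis"
    then have "ordered_ramsey t (m + n) E \<le> (2*t+1)*r" unfolding r_def by simp
    then show False using na L by blast
  qed
qed

end
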